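(* Let $(F_n)$ be the Fibonacci numbers ($F_0=0$, $F_1=1$, $F_{n+2}=F_{n+1}+F_n$), $(E_n)$ the sequence with $E_0=0$, $E_1=E_2=1$, $E_{n+3}=E_n+E_{n+2}$, and $(D_n)$ the sequence with $D_0=1$, $D_1=D_2=0$, $D_{n+3}=D_n+D_{n+1}$. Then $$D_n<E_{n-1}\ \text{ for all integers } n\ge 4,\qquad E_n<F_{n-1}\ \text{ for all integers } n\ge 6.$$ *)

theory Defs
  imports "HOL-Number_Theory.Fib"
begin

fun E :: "nat \<Rightarrow> nat" where
  "E 0 = 0"
| "E (Suc 0) = 1"
| "E (Suc (Suc 0)) = 1"
| "E (Suc (Suc (Suc n))) = E n + E (Suc (Suc n))"

fun D :: "nat \<Rightarrow> nat" where
  "D 0 = 1"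
| "D (Suc 0) = 0"
| "D (Suc (Suc 0)) = 0"
| "D (Suc (Suc (Suc n))) = D n + D (Suc n)"

end

theory Submission
  imports Defs
begin

lemma E_step: "E n \<le> E (Suc n)"
proof (induction n rule: E.induct)
  case (4 n) then show ?case by simp
qed simp_all

lemma E_mono: "m \<le> n \<Longrightarrow> E m \<le> E n"
  by (induction n) (auto simp: le_Suc_eq intro: order_trans[OF _ E_step])

lemma fib_step: "fib n \<le> fib (Suc n)"
  by (cases n) simp_all

lemma partD: "n \<ge> 4 \<Longrightarrow> D n < E (n - 1)"
proof (induction n rule: less_induct)
  case (less n)
  show ?case
  proof (cases "n \<le> 6")
    case True
    then have "n = 4 \<or> n = 5 \<or> n = 6" using less.prems by auto
    then show ?thesis by (auto simp: eval_nat_numeral)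
  next
    case False
    obtain m where m: "n = Suc (Suc (Suc m))" "m \<ge> 4"
      proof -
      show ?thesis using that[of "n - 3"] False by simp
    qed
    have h1: "D m < E (m - 1)" using less.IH m by auto
    have h2: "D (Suc m) < E m" using less.IH[of "Suc m"] m by auto
    obtain k where k: "m = Suc k" using m by (cases m) auto
    have "E (Suc k) \<le> E (Suc (Suc k))" by (rule E_step)
    then show ?thesis using h1 h2 m k by simp
  qed
qed

lemma partE: "n \<ge> 6 \<Longrightarrow> E n < fib (n - 1)"
proof (induction n rule: less_induct)
  case (less n)
  show ?case
  proof (cases "n \<le> 8")
    case True
    then have "n = 6 \<or> n = 7 \<or> n = 8" using less.prems by auto
    then show ?thesis by (auto simp: eval_nat_numeral)
  next
    case False
    obtain m where m: "n = Suc (Suc (Suc m))" "m \<ge> 6"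
      proof -
      show ?thesis using that[of "n - 3"] False by simp
    qed
    have h1: "E m < fib (m - 1)" using less.IH m by auto
    have h2: "E (Suc (Suc m)) < fib (Suc m)" using less.IH[of "Suc (Suc m)"] m by auto
    obtain k where k: "m = Suc k" using m by (cases m) auto
    have "fib k \<le> fib (Suc k)" by (rule fib_step)
    then show ?thesis using h1 h2 m k by simp
  qed
qed

theorem theorem12:
  shows "(\<forall>n::nat. n \<ge> 4 \<longrightarrow> D n < E (n - 1)) \<and>
         (\<forall>n::nat. n \<ge> 6 \<longrightarrow> E n < fib (n - 1))"
  using partD partE by blast

end
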